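(* Let $m\in\mathbb{N}$, let $\lambda_1<\dots<\lambda_m$ be real numbers and $\Lambda=\operatorname{diag}(\lambda_1,\dots,\lambda_m)$. Let $G$ be a tree with vertex set $[m]$. Let $g:E(G)\to\mathbb{N}$ be any function, let $N_0\in\mathbb{N}$ satisfy $N_0>\max\{g(e):e\in E(G)\}\cdot\operatorname{diam}(G)$, and define $f:E(G)\to\mathbb{N}$ by $f(e)=N_0+g(e)$. For $i,j\in V(G)$ let $P(i,j)$ be the (unique) path in $G$ from $i$ to $j$, and set $$c(i,j):=\prod_{k\in V(P(i,j))\setminus\{j\}}(\lambda_j-\lambda_k)^{-1},\qquad s(i,j):=\sum_{e\in E(P(i,j))}f(e),$$ so that $c(j,j)=1$, $s(j,j)=0$ and $c(i,j)\neq0$. Suppose $t_n>0$ with $t_n\to0$, and $A_n\in\mathcal M_{f,G}(t_n)\cap\mathcal E_\Lambda$ with $A_n\to\Lambda$ as $n\to\infty$. For each $n$ let $U_n=(u_n(i,j))$ be a real orthogonal matrix with nonnegative diagonal entries such that $U_n^\top A_nU_n=\Lambda$. Then for all $i,j\in V(G)$, $$\frac{u_n(i,j)}{t_n^{s(i,j)}}\to c(i,j)\quad\text{as }n\to\infty.$$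
   Context: For a simple graph $G$ on vertex set $[m]$, $S(G)$ is the set of real symmetric $m\times m$ matrices $A=(a(i,j))$ such that for $i\neq j$, $a(i,j)\neq0$ iff $\{i,j\}\in E(G)$; diagonal entries are unrestricted. For $f:E(G)\to\mathbb{N}$ and $t\in\mathbb{R}$, $\mathcal M_{f,G}(t):=\{A=(a(i,j))\in S(G): a(i,j)=t^{f(\{i,j\})}\text{ for }\{i,j\}\in E(G)\}$. $\mathcal E_\Lambda$ is the set of real symmetric $m\times m$ matrices with eigenvalues $\lambda_1,\dots,\lambda_m$. $\operatorname{diam}(G)$ is the diameter of $G$. *)

theory Defs
  imports Complex_Main "Jordan_Normal_Form.Char_Poly"
begin

(* Graphs on vertex set {0..<m}; edges are 2-element vertex sets. *)

definition simple_graph :: "nat \<Rightarrow> nat set set \<Rightarrow> bool" where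
  "simple_graph m E \<longleftrightarrow> (\<forall>e\<in>E. \<exists>i j. e = {i, j} \<and> i \<noteq> j \<and> i < m \<and> j < m)"

definition is_walk :: "nat set set \<Rightarrow> nat list \<Rightarrow> nat \<Rightarrow> nat \<Rightarrow> bool" where
  "is_walk E p i j \<longleftrightarrow> p \<noteq> [] \<and> hd p = i \<and> last p = j \<and>
     (\<forall>k. Suc k < length p \<longrightarrow> {p ! k, p ! Suc k} \<in> E)"

definition is_path :: "nat set set \<Rightarrow> nat list \<Rightarrow> nat \<Rightarrow> nat \<Rightarrow> bool" where
  "is_path E p i j \<longleftrightarrow> is_walk E p i j \<and> distinct p"

definition is_cycle :: "nat set set \<Rightarrow> nat list \<Rightarrow> bool" where
  "is_cycle E p \<longleftrightarrow> length p \<ge> 3 \<and> distinct p \<and>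
     (\<forall>k. Suc k < length p \<longrightarrow> {p ! k, p ! Suc k} \<in> E) \<and> {last p, hd p} \<in> E"

definition connected_graph :: "nat \<Rightarrow> nat set set \<Rightarrow> bool" where
  "connected_graph m E \<longleftrightarrow> (\<forall>i<m. \<forall>j<m. \<exists>p. is_walk E p i j)"

definition is_tree :: "nat \<Rightarrow> nat set set \<Rightarrow> bool" where
  "is_tree m E \<longleftrightarrow> simple_graph m E \<and> connected_graph m E \<and> (\<nexists>p. is_cycle E p)"

(* graph distance = number of edges of a shortest walk *)
definition graph_dist :: "nat set set \<Rightarrow> nat \<Rightarrow> nat \<Rightarrow> nat" where
  "graph_dist E i j = (LEAST n. \<exists>p. is_walk E p i j \<and> length p = Suc n)"

definition diam :: "nat \<Rightarrow> nat set set \<Rightarrow> nat" where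
  "diam m E = Max {graph_dist E i j | i j. i < m \<and> j < m}"

definition tree_path :: "nat set set \<Rightarrow> nat \<Rightarrow> nat \<Rightarrow> nat list" where
  "tree_path E i j = (THE p. is_path E p i j)"

definition path_edges :: "nat list \<Rightarrow> nat set set" where
  "path_edges p = {{p ! k, p ! Suc k} | k. Suc k < length p}"

definition in_S :: "nat \<Rightarrow> nat set set \<Rightarrow> real mat \<Rightarrow> bool" where
  "in_S m E A \<longleftrightarrow> A \<in> carrier_mat m m \<and> transpose_mat A = A \<and>
     (\<forall>i<m. \<forall>j<m. i \<noteq> j \<longrightarrow> (A $$ (i, j) \<noteq> 0 \<longleftrightarrow> {i, j} \<in> E))"

definition in_M :: "nat \<Rightarrow> nat set set \<Rightarrow> (nat set \<Rightarrow> nat) \<Rightarrow> real \<Rightarrow> real mat \<Rightarrow> bool" where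
  "in_M m E f t A \<longleftrightarrow> in_S m E A \<and>
     (\<forall>i<m. \<forall>j<m. {i, j} \<in> E \<longrightarrow> A $$ (i, j) = t ^ f {i, j})"

(* E_Lambda: real symmetric m x m matrices with eigenvalues lam_0, ..., lam_(m-1) (with multiplicity) *)
definition in_E :: "nat \<Rightarrow> (nat \<Rightarrow> real) \<Rightarrow> real mat \<Rightarrow> bool" where
  "in_E m lam A \<longleftrightarrow> A \<in> carrier_mat m m \<and> transpose_mat A = A \<and>
     char_poly A = (\<Prod>i<m. [:- lam i, 1:])"

definition diag_Lambda :: "nat \<Rightarrow> (nat \<Rightarrow> real) \<Rightarrow> real mat" where
  "diag_Lambda m lam = mat m m (\<lambda>(i, j). if i = j then lam i else 0)"

end

theory Submission
  imports Defs
begin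


lemma walk_Cons:
  assumes "is_walk E (x # w) i j" "w \<noteq> []"
  shows "is_walk E w (hd w) j" "x = i" "{x, hd w} \<in> E"
proof -
  show "is_walk E w (hd w) j" unfolding is_walk_def
  proof (intro conjI allI impI)
    fix k assume "Suc k < length w"
    then have "Suc (Suc k) < length (x # w)" by simp
    then have "{(x#w) ! Suc k, (x#w) ! Suc (Suc k)} \<in> E" using assms(1) unfolding is_walk_def by blast
    then show "{w ! k, w ! Suc k} \<in> E" by simp
  qed (use assms in \<open>auto simp: is_walk_def\<close>)
  show "x = i" using assms unfolding is_walk_def by auto
  have "{(x#w)!0, (x#w)!Suc 0} \<in> E" using assms unfolding is_walk_def
    by (metis length_Cons length_greater_0_conv less_Suc_eq_0_disj)
  thus "{x, hd w} \<in> E" using assms(2) by (simp add: hd_conv_nth)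
qed

lemma path_drop:
  assumes "is_path E p i j" "k < length p"
  shows "is_path E (drop k p) (p ! k) j"
  using assms unfolding is_path_def is_walk_def
  by (auto simp: hd_drop_conv_nth distinct_drop)

lemma path_Cons_intro:
  assumes "is_path E p y j" "{x, y} \<in> E" "x \<notin> set p"
  shows "is_path E (x # p) x j"
  using assms unfolding is_path_def is_walk_def
  apply (auto simp: nth_Cons split: nat.splits)
  by (metis hd_conv_nth less_Suc_eq_0_disj)

lemma walk_to_path:
  "is_walk E w i j \<Longrightarrow> \<exists>p. is_path E p i j \<and> length p \<le> length w"
proof (induction w arbitrary: i)
  case Nil then show ?case by (simp add: is_walk_def)
next
  case (Cons x w)
  show ?case
  proof (cases "w = []")
    case True
    then show ?thesis using Cons.prems by (auto simp: is_path_def is_walk_def)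
  next
    case False
    note wc = walk_Cons[OF Cons.prems False]
    from Cons.IH[OF wc(1)] obtain p' where p': "is_path E p' (hd w) j" "length p' \<le> length w"
      by blast
    show ?thesis
    proof (cases "x \<in> set p'")
      case True
      then obtain k where k: "k < length p'" "p' ! k = x" by (meson in_set_conv_nth)
      from path_drop[OF p'(1) k(1)] k wc(2) p'(2) show ?thesis
        by (intro exI[of _ "drop k p'"]) auto
    next
      case False
      from path_Cons_intro[OF p'(1) wc(3) False] wc(2) p'(2) show ?thesis
        by (intro exI[of _ "x # p'"]) auto
    qed
  qed
qed

lemma no_shortcut:
  assumes tree: "is_tree m E" and p: "is_path E p i j" and e: "{i, k} \<in> E" and k: "k \<in> set p"
  shows "k = p ! 1"
proof (rule ccontr)
  assume ne: "k \<noteq> p ! 1"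
  from k obtain r where r: "r < length p" "p ! r = k" by (meson in_set_conv_nth)
  have ik: "i \<noteq> k" using tree e unfolding is_tree_def simple_graph_def
    by (metis doubleton_eq_iff)
  have hd: "p ! 0 = i" using p unfolding is_path_def is_walk_def by (metis hd_conv_nth)
  have "r \<noteq> 0" using r hd ik by (metis)
  moreover have "r \<noteq> 1" using r ne by auto
  ultimately have r2: "r \<ge> 2" by auto
  define c where "c = take (Suc r) p"
  have "is_cycle E c"
    unfolding is_cycle_def
  proof (intro conjI allI impI)
    show "3 \<le> length c" using r r2 by (simp add: c_def)
    show "distinct c" using p by (simp add: c_def is_path_def)
    fix q assume "Suc q < length c"
    then show "{c ! q, c ! Suc q} \<in> E" using p r unfolding c_def is_path_def is_walk_def
      by auto
  next
    have "last c = k" using r unfolding c_def by (subst last_conv_nth) (auto simp: min_def intro: arg_cong[where f="(!) p"])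
    moreover have "hd c = i" using p r unfolding c_def is_path_def is_walk_def by simp
    ultimately show "{last c, hd c} \<in> E" using e by (simp add: insert_commute)
  qed
  with tree show False unfolding is_tree_def by blast
qed

lemma path_same:
  assumes "is_path E p i i" shows "p = [i]"
proof (cases p)
  case Nil then show ?thesis using assms by (simp add: is_path_def is_walk_def)
next
  case (Cons x xs)
  show ?thesis
  proof (cases "xs = []")
    case True then show ?thesis using assms Cons by (simp add: is_path_def is_walk_def)
  next
    case False
    then have "last xs \<in> set xs" by simp
    moreover have "last xs = x" using assms Cons False by (simp add: is_path_def is_walk_def)
    ultimately show ?thesis using assms Cons by (simp add: is_path_def)
  qed
qed

lemma path_unique:
  assumes tree: "is_tree m E"
  shows "is_path E q i j \<Longrightarrow> is_path E p i j \<Longrightarrow> p = q"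
proof (induction q arbitrary: i p)
  case Nil then show ?case by (simp add: is_path_def is_walk_def)
next
  case (Cons y q')
  show ?case
  proof (cases "i = j")
    case True then show ?thesis using path_same Cons.prems by metis
  next
    case False
    have q'ne: "q' \<noteq> []" using Cons.prems False by (auto simp: is_path_def is_walk_def)
    obtain x p' where pe: "p = x # p'" using Cons.prems by (cases p) (auto simp: is_path_def is_walk_def)
    have p'ne: "p' \<noteq> []" using Cons.prems False pe by (auto simp: is_path_def is_walk_def)
    have wq: "is_walk E (y # q') i j" and wp: "is_walk E (x # p') i j"
      using Cons.prems pe by (auto simp: is_path_def)
    note wcq = walk_Cons[OF wq q'ne] and wcp = walk_Cons[OF wp p'ne]
    have pq': "is_path E q' (hd q') j" using wcq Cons.prems by (simp add: is_path_def)
    have pp': "is_path E p' (hd p') j" using wcp Cons.prems pe by (simp add: is_path_def)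
    show ?thesis
    proof (cases "hd q' \<in> set p")
      case True
      have "hd q' = p ! 1" using no_shortcut[OF tree Cons.prems(2) _ True] wcq by simp
      hence "hd q' = hd p'" using pe p'ne by (simp add: hd_conv_nth)
      then have "p' = q'" using Cons.IH[OF pq'] pp' by simp
      then show ?thesis using pe wcq wcp by simp
    next
      case False
      have "{hd q', i} \<in> E" using wcq by (simp add: insert_commute)
      have "is_path E (hd q' # p) (hd q') j"
        using path_Cons_intro[OF Cons.prems(2) \<open>{hd q', i} \<in> E\<close> False] .
      from Cons.IH[OF pq' this] have "hd q' # p = q'" .
      hence "i \<in> set q'" using pe wcp by (metis list.set_intros(1) list.set_intros(2))
      then show ?thesis using Cons.prems wcq by (simp add: is_path_def)
    qed
  qed
qed

lemma walk_verts:
  assumes "simple_graph m E" "is_walk E p i j" "i < m" "x \<in> set p"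
  shows "x < m"
proof -
  from assms(4) obtain k where k: "k < length p" "p ! k = x" by (meson in_set_conv_nth)
  show ?thesis
  proof (cases k)
    case 0 then show ?thesis using assms k unfolding is_walk_def by (metis hd_conv_nth)
  next
    case (Suc k')
    then have "{p ! k', p ! k} \<in> E" using assms(2) k unfolding is_walk_def by auto
    then obtain a b where ab: "{p ! k', p ! k} = {a,b}" "a < m" "b < m"
      using assms(1) unfolding simple_graph_def by blast
    have "x \<in> {a, b}" using ab(1) k by blast
    then show ?thesis using ab by auto
  qed
qed

lemma tp_eq:
  assumes "is_tree m E" "is_path E p i j"
  shows "tree_path E i j = p"
  unfolding tree_path_def using path_unique[OF assms(1)] assms(2) by blast

lemma tp_path:
  assumes tree: "is_tree m E" and ij: "i < m" "j < m"
  shows "is_path E (tree_path E i j) i j"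
proof -
  obtain w where "is_walk E w i j" using tree ij unfolding is_tree_def connected_graph_def by blast
  from walk_to_path[OF this] obtain p where "is_path E p i j" by blast
  with tp_eq[OF tree this] show ?thesis by simp
qed

lemma tp_len_dist:
  assumes tree: "is_tree m E" and ij: "i < m" "j < m"
  shows "length (tree_path E i j) \<le> Suc (graph_dist E i j)"
proof -
  have ex: "\<exists>n. \<exists>p. is_walk E p i j \<and> length p = Suc n"
  proof -
    obtain w where w: "is_walk E w i j" using tree ij unfolding is_tree_def connected_graph_def by blast
    then have "w \<noteq> []" by (simp add: is_walk_def)
    then have "length w = Suc (length w - 1)" by simp
    with w show ?thesis by blast
  qed
  obtain w where w: "is_walk E w i j" "length w = Suc (graph_dist E i j)"
    using LeastI_ex[OF ex] unfolding graph_dist_def by blast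
  from walk_to_path[OF w(1)] obtain p where "is_path E p i j" "length p \<le> length w" by blast
  with tp_eq[OF tree this(1)] w show ?thesis by simp
qed

lemma tp_len_diam:
  assumes tree: "is_tree m E" and ij: "i < m" "j < m"
  shows "length (tree_path E i j) \<le> Suc (diam m E)"
proof -
  have fin: "finite {graph_dist E i j | i j. i < m \<and> j < m}"
  proof -
    have "{graph_dist E i j | i j. i < m \<and> j < m} = (\<lambda>(i,j). graph_dist E i j) ` ({..<m} \<times> {..<m})"
      by auto
    then show ?thesis by simp
  qed
  have "graph_dist E i j \<le> diam m E" unfolding diam_def
    by (rule Max_ge[OF fin]) (use ij in blast)
  with tp_len_dist[OF assms] show ?thesis by simp
qed

lemma path_len_m:
  assumes tree: "is_tree m E" and "is_path E p i j" "i < m"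
  shows "length p \<le> m"
proof -
  have "set p \<subseteq> {..<m}" using walk_verts[of m E p i j] assms unfolding is_tree_def is_path_def by auto
  then have "card (set p) \<le> m" by (metis card_lessThan card_mono finite_lessThan)
  then show ?thesis using assms(2) by (simp add: is_path_def distinct_card)
qed

lemma path_edges_Cons:
  assumes "p \<noteq> []"
  shows "path_edges (x # p) = insert {x, hd p} (path_edges p)"
proof -
  have "path_edges (x # p) = {{(x#p) ! k, (x#p) ! Suc k} | k. Suc k < length (x#p)}"
    by (simp add: path_edges_def)
  also have "\<dots> = insert {x, hd p} {{p ! k, p ! Suc k} | k. Suc k < length p}"
  proof (intro equalityI subsetI)
    fix e assume "e \<in> {{(x#p) ! k, (x#p) ! Suc k} | k. Suc k < length (x#p)}"
    then obtain k where k: "e = {(x#p) ! k, (x#p) ! Suc k}" "Suc k < length (x#p)" by blast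
    show "e \<in> insert {x, hd p} {{p ! k, p ! Suc k} | k. Suc k < length p}"
    proof (cases k)
      case 0 then show ?thesis using k assms by (simp add: hd_conv_nth)
    next
      case (Suc k') then show ?thesis using k by auto
    qed
  next
    fix e assume "e \<in> insert {x, hd p} {{p ! k, p ! Suc k} | k. Suc k < length p}"
    then show "e \<in> {{(x#p) ! k, (x#p) ! Suc k} | k. Suc k < length (x#p)}"
    proof
      assume "e = {x, hd p}"
      then have "e = {(x#p) ! 0, (x#p) ! Suc 0}" "Suc 0 < length (x#p)" using assms by (auto simp: hd_conv_nth)
      then show ?thesis by blast
    next
      assume "e \<in> {{p ! k, p ! Suc k} | k. Suc k < length p}"
      then obtain k where k: "e = {p ! k, p ! Suc k}" "Suc k < length p" by blast
      then have "e = {(x#p) ! Suc k, (x#p) ! Suc (Suc k)}" "Suc (Suc k) < length (x#p)" by auto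
      then show ?thesis by blast
    qed
  qed
  finally show ?thesis by (simp add: path_edges_def)
qed

lemma path_edges_finite: "finite (path_edges p)"
proof -
  have "path_edges p = (\<lambda>k. {p ! k, p ! Suc k}) ` {k. Suc k < length p}"
    by (auto simp: path_edges_def)
  also have "{k. Suc k < length p} = {..<length p - 1}" by auto
  finally show ?thesis by simp
qed

lemma path_edges_card: "card (path_edges p) \<le> length p - 1"
proof -
  have "path_edges p = (\<lambda>k. {p ! k, p ! Suc k}) ` {k. Suc k < length p}"
    by (auto simp: path_edges_def)
  also have "{k. Suc k < length p} = {..<length p - 1}" by auto
  finally have "card (path_edges p) \<le> card {..<length p - 1}" by (metis card_image_le finite_lessThan)
  then show ?thesis by simp
qed

lemma path_edges_sub: "is_walk E p i j \<Longrightarrow> path_edges p \<subseteq> E"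
  by (auto simp: path_edges_def is_walk_def)

lemma path_edges_notin:
  assumes "x \<notin> set p" shows "{x, y} \<notin> path_edges p"
  using assms by (auto simp: path_edges_def doubleton_eq_iff)

lemma tp_next:
  assumes tree: "is_tree m E" and kj: "k < m" "j < m" "k \<noteq> j"
  defines "p \<equiv> tree_path E k j"
  shows "length p \<ge> 2" "{k, p ! 1} \<in> E" "p ! 1 < m" "tree_path E (p ! 1) j = tl p"
        "p = k # tl p" "k \<notin> set (tl p)" "hd (tl p) = p ! 1"
proof -
  have pp: "is_path E p k j" using tp_path[OF tree kj(1,2)] by (simp add: p_def)
  have ne: "p \<noteq> []" using pp by (simp add: is_path_def is_walk_def)
  show "length p \<ge> 2"
  proof (rule ccontr)
    assume "\<not> 2 \<le> length p"
    then have "length p = 1" using ne by (cases p) (auto simp: Suc_le_eq)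
    then have "hd p = last p" by (cases p) auto
    then show False using pp kj by (simp add: is_path_def is_walk_def)
  qed
  then have "Suc 0 < length p" by simp
  then have e: "{p ! 0, p ! 1} \<in> E" using pp unfolding is_path_def is_walk_def by simp
  have h0: "p ! 0 = k" using pp ne by (simp add: is_path_def is_walk_def hd_conv_nth)
  then show "{k, p ! 1} \<in> E" using e by simp
  show "p ! 1 < m"
    using walk_verts[of m E p k j "p ! 1"] tree pp kj \<open>Suc 0 < length p\<close>
    unfolding is_tree_def is_path_def by simp
  obtain xs where xs: "p = k # xs" using ne h0 by (cases p) auto
  show pe: "p = k # tl p" using xs by simp
  have tl: "is_path E (drop 1 p) (p ! 1) j" using path_drop[OF pp] \<open>Suc 0 < length p\<close> by simp
  then show "tree_path E (p ! 1) j = tl p" using tp_eq[OF tree] by (simp add: drop_Suc)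
  have "distinct p" using pp by (simp add: is_path_def)
  then show "k \<notin> set (tl p)" using xs by simp
  have "xs \<noteq> []" using xs \<open>Suc 0 < length p\<close> by auto
  then show "hd (tl p) = p ! 1" using xs by (simp add: hd_conv_nth)
qed

lemma tp_nbr:
  assumes tree: "is_tree m E" and kj: "k < m" "j < m" and e: "{k, l} \<in> E"
    and alt: "k = j \<or> l \<noteq> tree_path E k j ! 1"
  shows "tree_path E l j = l # tree_path E k j"
proof -
  have pp: "is_path E (tree_path E k j) k j" using tp_path[OF tree kj] .
  have kl: "k \<noteq> l" using tree e unfolding is_tree_def simple_graph_def by (metis doubleton_eq_iff)
  have nin: "l \<notin> set (tree_path E k j)"
  proof
    assume l: "l \<in> set (tree_path E k j)"
    show False
    proof (cases "k = j")
      case True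
      then have "tree_path E k j = [k]" using path_same pp by metis
      then show False using l kl by simp
    next
      case False
      then show False using no_shortcut[OF tree pp e l] alt by simp
    qed
  qed
  have "{l, k} \<in> E" using e by (simp add: insert_commute)
  from path_Cons_intro[OF pp this nin] show ?thesis using tp_eq[OF tree] by blast
qed



locale L =
  fixes m :: nat and lam :: "nat \<Rightarrow> real" and E :: "nat set set"
    and g :: "nat set \<Rightarrow> nat" and N0 :: nat and f :: "nat set \<Rightarrow> nat"
    and t :: "nat \<Rightarrow> real" and A U :: "nat \<Rightarrow> real mat"
  assumes lam_mono: "\<And>i j. i < j \<Longrightarrow> j < m \<Longrightarrow> lam i < lam j"
    and tree: "is_tree m E"
    and N0: "N0 > Max (g ` E) * diam m E"
    and f_def: "\<And>e. e \<in> E \<Longrightarrow> f e = N0 + g e"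
    and t_pos: "\<And>n. t n > 0"
    and t_lim: "t \<longlonglongrightarrow> 0"
    and A_M: "\<And>n. in_M m E f (t n) (A n)"
    and A_E: "\<And>n. in_E m lam (A n)"
    and A_lim: "\<And>i j. i < m \<Longrightarrow> j < m \<Longrightarrow>
                  (\<lambda>n. A n $$ (i, j)) \<longlonglongrightarrow> diag_Lambda m lam $$ (i, j)"
    and U_carrier: "\<And>n. U n \<in> carrier_mat m m"
    and U_orth: "\<And>n. transpose_mat (U n) * U n = 1\<^sub>m m"
    and U_diag: "\<And>n i. i < m \<Longrightarrow> U n $$ (i, i) \<ge> 0"
    and U_diagonalizes: "\<And>n. transpose_mat (U n) * A n * U n = diag_Lambda m lam"
begin

lemma finE: "finite E"
proof -
  have "E \<subseteq> (\<lambda>(i,j). {i,j}) ` ({..<m} \<times> {..<m})"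
    using tree unfolding is_tree_def simple_graph_def by fastforce
  then show ?thesis by (rule finite_subset) simp
qed

lemma A_carrier: "A n \<in> carrier_mat m m"
  using A_M[of n] unfolding in_M_def in_S_def by simp

lemma A_off:
  assumes "k < m" "l < m" "k \<noteq> l"
  shows "A n $$ (k,l) = (if {k,l} \<in> E then t n ^ f {k,l} else 0)"
  using A_M[of n] assms unfolding in_M_def in_S_def by auto

lemma A_diag_lim: "k < m \<Longrightarrow> (\<lambda>n. A n $$ (k,k)) \<longlonglongrightarrow> lam k"
  using A_lim[of k k] by (simp add: diag_Lambda_def)

lemma eig:
  assumes "k < m" "j < m"
  shows "(\<Sum>l<m. A n $$ (k,l) * U n $$ (l,j)) = lam j * U n $$ (k,j)"
proof -
  have Uc: "U n \<in> carrier_mat m m" by (rule U_carrier)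
  have UTc: "transpose_mat (U n) \<in> carrier_mat m m" using Uc by simp
  have Ac: "A n \<in> carrier_mat m m" by (rule A_carrier)
  have Dc: "diag_Lambda m lam \<in> carrier_mat m m" by (simp add: diag_Lambda_def)
  have inv: "U n * transpose_mat (U n) = 1\<^sub>m m"
    by (rule mat_mult_left_right_inverse[OF UTc Uc U_orth])
  have "A n * U n = (U n * transpose_mat (U n)) * A n * U n"
    using inv Ac Uc by simp
  also have "\<dots> = U n * (transpose_mat (U n) * A n * U n)"
    using Ac Uc UTc by (simp add: assoc_mult_mat[of _ m m _ m _ m])
  also have "\<dots> = U n * diag_Lambda m lam" by (simp add: U_diagonalizes)
  finally have eq: "A n * U n = U n * diag_Lambda m lam" .
  have "(A n * U n) $$ (k,j) = (\<Sum>l<m. A n $$ (k,l) * U n $$ (l,j))"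
    using Ac Uc assms by (simp add: scalar_prod_def lessThan_atLeast0)
  moreover have "(U n * diag_Lambda m lam) $$ (k,j) = lam j * U n $$ (k,j)"
  proof -
    have "(U n * diag_Lambda m lam) $$ (k,j) =
          (\<Sum>l\<in>{0..<m}. U n $$ (k,l) * (if l = j then lam l else 0))"
      using Uc assms by (simp add: scalar_prod_def diag_Lambda_def)
    also have "\<dots> = (\<Sum>l\<in>{0..<m}. if l = j then U n $$ (k,l) * lam l else 0)"
      by (rule sum.cong) auto
    also have "\<dots> = lam j * U n $$ (k,j)" using assms by simp
    finally show ?thesis .
  qed
  ultimately show ?thesis using eq by simp
qed

lemma colnorm:
  assumes "j < m" shows "(\<Sum>k<m. (U n $$ (k,j))^2) = 1"
proof -
  have Uc: "U n \<in> carrier_mat m m" by (rule U_carrier)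
  have "(transpose_mat (U n) * U n) $$ (j,j) = 1" using U_orth assms by simp
  moreover have "(transpose_mat (U n) * U n) $$ (j,j) = (\<Sum>k<m. (U n $$ (k,j))^2)"
    using Uc assms by (simp add: scalar_prod_def lessThan_atLeast0 power2_eq_square)
  ultimately show ?thesis by simp
qed

lemma ubound:
  assumes "k < m" "j < m" shows "\<bar>U n $$ (k,j)\<bar> \<le> 1"
proof -
  have "(U n $$ (k,j))^2 \<le> (\<Sum>k<m. (U n $$ (k,j))^2)"
    by (rule member_le_sum) (use assms in auto)
  then have "(U n $$ (k,j))^2 \<le> 1" using colnorm[OF assms(2)] by simp
  then show ?thesis by (simp add: abs_square_le_1)
qed

lemma tpj: "j < m \<Longrightarrow> tree_path E j j = [j]"
  using tp_path[OF tree] path_same by metis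

lemma tp_ne: "k < m \<Longrightarrow> j < m \<Longrightarrow> 1 \<le> length (tree_path E k j)"
  using tp_path[OF tree, of k j] by (cases "tree_path E k j") (auto simp: is_path_def is_walk_def)

lemma tp_ge2: "k < m \<Longrightarrow> j < m \<Longrightarrow> k \<noteq> j \<Longrightarrow> 2 \<le> length (tree_path E k j)"
  using tp_next(1)[OF tree] by blast

lemma tp_le_m: "k < m \<Longrightarrow> j < m \<Longrightarrow> length (tree_path E k j) \<le> m"
  using path_len_m[OF tree tp_path[OF tree]] by blast

lemma nbr_lt: "{k, l} \<in> E \<Longrightarrow> l < m \<and> k < m \<and> k \<noteq> l"
  using tree unfolding is_tree_def simple_graph_def by (auto simp: doubleton_eq_iff)

lemma dd_nbr:
  assumes "k < m" "j < m" "{k, l} \<in> E"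
  shows "length (tree_path E k j) \<le> Suc (length (tree_path E l j))"
proof (cases "k \<noteq> j \<and> l = tree_path E k j ! 1")
  case True
  then have "tree_path E l j = tl (tree_path E k j)" using tp_next(4)[OF tree assms(1,2)] by simp
  then show ?thesis by simp
next
  case False
  then have "tree_path E l j = l # tree_path E k j" using tp_nbr[OF tree assms] by blast
  then show ?thesis by simp
qed

lemma lam_ne: "k < m \<Longrightarrow> j < m \<Longrightarrow> k \<noteq> j \<Longrightarrow> lam j \<noteq> lam k"
  using lam_mono by (metis less_irrefl nat_neq_iff)

lemma t_le1: "eventually (\<lambda>n. t n \<le> 1) sequentially"
proof -
  have "eventually (\<lambda>n. t n < 1) sequentially" using t_lim by (rule order_tendstoD) simp
  then show ?thesis by (rule eventually_mono) simp
qed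

lemma gap:
  assumes j: "j < m"
  shows "\<exists>\<delta>>0. eventually (\<lambda>n. \<forall>k\<in>{..<m}-{j}. \<delta> \<le> \<bar>lam j - A n $$ (k,k)\<bar>) sequentially"
proof (cases "{..<m}-{j} = {}")
  case True show ?thesis unfolding True by (intro exI[of _ 1]) simp
next
  case False
  define K where "K = {..<m}-{j}"
  define \<delta> where "\<delta> = Min ((\<lambda>k. \<bar>lam j - lam k\<bar> / 2) ` K)"
  have finK: "finite K" by (simp add: K_def)
  have "\<delta> \<in> (\<lambda>k. \<bar>lam j - lam k\<bar> / 2) ` K" unfolding \<delta>_def
    by (rule Min_in) (use finK False K_def in auto)
  then obtain k0 where "k0 \<in> K" "\<delta> = \<bar>lam j - lam k0\<bar> / 2" by blast
  then have dpos: "\<delta> > 0" using lam_ne[of k0 j] j by (auto simp: K_def)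
  have "\<forall>k\<in>K. eventually (\<lambda>n. \<delta> \<le> \<bar>lam j - A n $$ (k,k)\<bar>) sequentially"
  proof
    fix k assume k: "k \<in> K"
    have lim: "(\<lambda>n. \<bar>lam j - A n $$ (k,k)\<bar>) \<longlonglongrightarrow> \<bar>lam j - lam k\<bar>"
      using A_diag_lim[of k] k by (auto simp: K_def intro!: tendsto_intros)
    have pos: "\<bar>lam j - lam k\<bar> > 0" using lam_ne[of k j] j k by (auto simp: K_def)
    have "\<delta> \<le> \<bar>lam j - lam k\<bar> / 2" unfolding \<delta>_def using finK k by (intro Min_le) auto
    moreover have "eventually (\<lambda>n. \<bar>lam j - A n $$ (k,k)\<bar> > \<bar>lam j - lam k\<bar> / 2) sequentially"
      using lim by (rule order_tendstoD) (use pos in simp)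
    ultimately show "eventually (\<lambda>n. \<delta> \<le> \<bar>lam j - A n $$ (k,k)\<bar>) sequentially"
      by (auto elim: eventually_mono)
  qed
  then have "eventually (\<lambda>n. \<forall>k\<in>K. \<delta> \<le> \<bar>lam j - A n $$ (k,k)\<bar>) sequentially"
    using finK by (simp add: eventually_ball_finite)
  then show ?thesis using dpos unfolding K_def by blast
qed

lemma eig_split:
  assumes "k < m" "j < m"
  shows "(lam j - A n $$ (k,k)) * U n $$ (k,j) = (\<Sum>l\<in>{..<m}-{k}. A n $$ (k,l) * U n $$ (l,j))"
proof -
  have "(\<Sum>l<m. A n $$ (k,l) * U n $$ (l,j)) = A n $$ (k,k) * U n $$ (k,j) + (\<Sum>l\<in>{..<m}-{k}. A n $$ (k,l) * U n $$ (l,j))"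
    by (rule sum.remove) (use assms in auto)
  then show ?thesis using eig[OF assms, of n] by (simp add: algebra_simps)
qed

lemma f_ge: "e \<in> E \<Longrightarrow> N0 \<le> f e"
  using f_def by simp

lemma crude:
  assumes j: "j < m"
  shows "\<exists>C\<ge>0. eventually (\<lambda>n. \<forall>k<m. \<bar>U n $$ (k,j)\<bar> \<le> C * t n ^ (N0 * min r (length (tree_path E k j) - 1))) sequentially"
proof (induction r)
  case 0 show ?case by (intro exI[of _ 1]) (auto simp: ubound j)
next
  case (Suc r)
  from Suc obtain C where C0: "C \<ge> 0" and
    C: "eventually (\<lambda>n. \<forall>k<m. \<bar>U n $$ (k,j)\<bar> \<le> C * t n ^ (N0 * min r (length (tree_path E k j) - 1))) sequentially"
    by blast
  from gap[OF j] obtain \<delta> where dpos: "\<delta> > 0"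
    and gapev: "eventually (\<lambda>n. \<forall>k\<in>{..<m}-{j}. \<delta> \<le> \<bar>lam j - A n $$ (k,k)\<bar>) sequentially" by blast
  define C' where "C' = 1 + real m * C / \<delta>"
  have C'0: "C' \<ge> 1" using C0 dpos by (simp add: C'_def)
  have "eventually (\<lambda>n. \<forall>k<m. \<bar>U n $$ (k,j)\<bar> \<le> C' * t n ^ (N0 * min (Suc r) (length (tree_path E k j) - 1))) sequentially"
    using eventually_conj[OF C eventually_conj[OF gapev t_le1]]
  proof (rule eventually_mono)
    fix n assume H: "(\<forall>k<m. \<bar>U n $$ (k,j)\<bar> \<le> C * t n ^ (N0 * min r (length (tree_path E k j) - 1))) \<and>
       (\<forall>k\<in>{..<m}-{j}. \<delta> \<le> \<bar>lam j - A n $$ (k,k)\<bar>) \<and> t n \<le> 1"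
    have t0: "0 \<le> t n" using t_pos[of n] by simp
    show "\<forall>k<m. \<bar>U n $$ (k,j)\<bar> \<le> C' * t n ^ (N0 * min (Suc r) (length (tree_path E k j) - 1))"
    proof (intro allI impI)
      fix k assume k: "k < m"
      show "\<bar>U n $$ (k,j)\<bar> \<le> C' * t n ^ (N0 * min (Suc r) (length (tree_path E k j) - 1))"
      proof (cases "k = j")
        case True
        then show ?thesis using tpj[OF j] ubound[OF j j, of n] C'0 by simp
      next
        case False
        define e where "e = N0 * min (Suc r) (length (tree_path E k j) - 1)"
        have trm: "\<bar>A n $$ (k,l) * U n $$ (l,j)\<bar> \<le> C * t n ^ e" if l: "l \<in> {..<m}-{k}" for l
        proof (cases "{k,l} \<in> E")
          case False
          then have "A n $$ (k,l) = 0" using A_off[of k l n] k l by auto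
          then show ?thesis using C0 t0 by simp
        next
          case True
          have lm: "l < m" using l by simp
          have Akl: "A n $$ (k,l) = t n ^ f {k,l}" using A_off[of k l n] k l True by auto
          have "\<bar>A n $$ (k,l) * U n $$ (l,j)\<bar> = t n ^ f {k,l} * \<bar>U n $$ (l,j)\<bar>"
            using Akl t0 by (simp add: abs_mult)
          also have "\<dots> \<le> t n ^ N0 * (C * t n ^ (N0 * min r (length (tree_path E l j) - 1)))"
          proof (rule mult_mono)
            show "t n ^ f {k,l} \<le> t n ^ N0" using f_ge[OF True] t0 H by (intro power_decreasing) auto
            show "\<bar>U n $$ (l,j)\<bar> \<le> C * t n ^ (N0 * min r (length (tree_path E l j) - 1))"
              using H lm by blast
          qed (use t0 in auto)
          also have "\<dots> = C * t n ^ (N0 + N0 * min r (length (tree_path E l j) - 1))"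
            by (simp add: power_add)
          also have "\<dots> \<le> C * t n ^ e"
          proof (rule mult_left_mono)
            have "length (tree_path E k j) \<le> Suc (length (tree_path E l j))" by (rule dd_nbr[OF k j True])
            moreover have "1 \<le> length (tree_path E l j)" by (rule tp_ne[OF lm j])
            ultimately have "min (Suc r) (length (tree_path E k j) - 1) \<le> Suc (min r (length (tree_path E l j) - 1))"
              by linarith
            then have "e \<le> N0 * Suc (min r (length (tree_path E l j) - 1))" unfolding e_def by (rule mult_le_mono2)
            then have "e \<le> N0 + N0 * min r (length (tree_path E l j) - 1)" by simp
            then show "t n ^ (N0 + N0 * min r (length (tree_path E l j) - 1)) \<le> t n ^ e"
              using t0 H by (intro power_decreasing) auto
          qed (use C0 in auto)
          finally show ?thesis .
        qed
        have "\<bar>(lam j - A n $$ (k,k)) * U n $$ (k,j)\<bar> = \<bar>\<Sum>l\<in>{..<m}-{k}. A n $$ (k,l) * U n $$ (l,j)\<bar>"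
          using eig_split[OF k j] by simp
        also have "\<dots> \<le> (\<Sum>l\<in>{..<m}-{k}. \<bar>A n $$ (k,l) * U n $$ (l,j)\<bar>)" by (rule sum_abs)
        also have "\<dots> \<le> (\<Sum>l\<in>{..<m}-{k}. C * t n ^ e)" by (rule sum_mono) (rule trm)
        also have "\<dots> = real (card ({..<m}-{k})) * (C * t n ^ e)" by simp
        also have "\<dots> \<le> real m * (C * t n ^ e)"
        proof (rule mult_right_mono)
          have "card ({..<m}-{k}) \<le> card {..<m}" by (rule card_mono) auto
          then show "real (card ({..<m}-{k})) \<le> real m" by simp
        qed (use C0 t0 in auto)
        finally have b1: "\<bar>lam j - A n $$ (k,k)\<bar> * \<bar>U n $$ (k,j)\<bar> \<le> real m * (C * t n ^ e)"
          by (simp add: abs_mult)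
        have "\<delta> \<le> \<bar>lam j - A n $$ (k,k)\<bar>" using H k False by auto
        then have "\<delta> * \<bar>U n $$ (k,j)\<bar> \<le> real m * (C * t n ^ e)"
          using b1 by (meson abs_ge_zero mult_right_mono order_trans)
        then have "\<bar>U n $$ (k,j)\<bar> \<le> real m * C / \<delta> * t n ^ e"
          using dpos by (simp add: field_simps)
        also have "\<dots> \<le> C' * t n ^ e" unfolding C'_def using t0 by (intro mult_right_mono) auto
        finally show ?thesis unfolding e_def .
      qed
    qed
  qed
  then show ?case using C'0 by (intro exI[of _ C']) auto
qed

lemma null_cmp:
  assumes "eventually (\<lambda>n. \<bar>x n\<bar> \<le> C * t n) sequentially"
  shows "(x :: nat \<Rightarrow> real) \<longlonglongrightarrow> 0"
proof (rule tendsto_0_le[OF t_lim])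
  show "eventually (\<lambda>n. norm (x n) \<le> norm (t n) * C) sequentially"
    using assms
  proof (rule eventually_mono)
    fix n assume "\<bar>x n\<bar> \<le> C * t n"
    then show "norm (x n) \<le> norm (t n) * C" using t_pos[of n] by (simp add: abs_of_pos mult.commute)
  qed
qed

lemma crude2:
  assumes j: "j < m"
  shows "\<exists>C\<ge>0. eventually (\<lambda>n. \<forall>k<m. \<bar>U n $$ (k,j)\<bar> \<le> C * t n ^ (N0 * (length (tree_path E k j) - 1))) sequentially"
proof -
  from crude[OF j, of m] obtain C where C: "C \<ge> 0"
    "eventually (\<lambda>n. \<forall>k<m. \<bar>U n $$ (k,j)\<bar> \<le> C * t n ^ (N0 * min m (length (tree_path E k j) - 1))) sequentially"
    by blast
  have "min m (length (tree_path E k j) - 1) = length (tree_path E k j) - 1" if "k < m" for k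
    using tp_le_m[OF that j] by simp
  then show ?thesis using C by (intro exI[of _ C]) (auto elim!: eventually_mono)
qed

lemma N0pos: "1 \<le> N0"
  using N0 by simp

lemma off0:
  assumes j: "j < m" and k: "k < m" "k \<noteq> j"
  shows "(\<lambda>n. U n $$ (k,j)) \<longlonglongrightarrow> 0"
proof -
  from crude2[OF j] obtain C where C: "C \<ge> 0"
    "eventually (\<lambda>n. \<forall>k<m. \<bar>U n $$ (k,j)\<bar> \<le> C * t n ^ (N0 * (length (tree_path E k j) - 1))) sequentially"
    by blast
  have ex: "1 \<le> N0 * (length (tree_path E k j) - 1)"
    using tp_ge2[OF k(1) j k(2)] N0pos by (simp add: Suc_le_eq)
  have "eventually (\<lambda>n. \<bar>U n $$ (k,j)\<bar> \<le> C * t n) sequentially"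
    using eventually_conj[OF C(2) t_le1]
  proof (rule eventually_mono)
    fix n assume H: "(\<forall>k<m. \<bar>U n $$ (k,j)\<bar> \<le> C * t n ^ (N0 * (length (tree_path E k j) - 1))) \<and> t n \<le> 1"
    have "t n ^ (N0 * (length (tree_path E k j) - 1)) \<le> t n ^ 1"
      using H t_pos[of n] ex by (intro power_decreasing) auto
    then have "C * t n ^ (N0 * (length (tree_path E k j) - 1)) \<le> C * t n"
      using C(1) by (simp add: mult_left_mono)
    then show "\<bar>U n $$ (k,j)\<bar> \<le> C * t n" using H k by force
  qed
  then show ?thesis by (rule null_cmp)
qed

lemma diag1:
  assumes j: "j < m"
  shows "(\<lambda>n. U n $$ (j,j)) \<longlonglongrightarrow> 1"
proof -
  have "(\<lambda>n. \<Sum>k\<in>{..<m}-{j}. (U n $$ (k,j))^2) \<longlonglongrightarrow> 0"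
  proof (rule tendsto_null_sum)
    fix k assume "k \<in> {..<m}-{j}"
    then show "(\<lambda>n. (U n $$ (k,j))^2) \<longlonglongrightarrow> 0" using off0[OF j] tendsto_power[of _ 0 _ 2] by force
  qed
  then have lim: "(\<lambda>n. 1 - (\<Sum>k\<in>{..<m}-{j}. (U n $$ (k,j))^2)) \<longlonglongrightarrow> 1 - 0"
    by (intro tendsto_intros)
  have eq: "(U n $$ (j,j))^2 = 1 - (\<Sum>k\<in>{..<m}-{j}. (U n $$ (k,j))^2)" for n
  proof -
    have "(\<Sum>k<m. (U n $$ (k,j))^2) = (U n $$ (j,j))^2 + (\<Sum>k\<in>{..<m}-{j}. (U n $$ (k,j))^2)"
      by (rule sum.remove) (use j in auto)
    then show ?thesis using colnorm[OF j, of n] by simp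
  qed
  have "(\<lambda>n. (U n $$ (j,j))^2) \<longlonglongrightarrow> 1" using lim unfolding eq[symmetric] by simp
  then have "(\<lambda>n. sqrt ((U n $$ (j,j))^2)) \<longlonglongrightarrow> sqrt 1" by (rule tendsto_real_sqrt)
  moreover have "sqrt ((U n $$ (j,j))^2) = U n $$ (j,j)" for n using U_diag[OF j, of n] by simp
  ultimately show ?thesis by simp
qed

definition S where "S j k = (\<Sum>e\<in>path_edges (tree_path E k j). f e)"
definition Cc where "Cc j k = (\<Prod>k'\<in>set (tree_path E k j) - {j}. inverse (lam j - lam k'))"

lemma S_j: "j < m \<Longrightarrow> S j j = 0"
  unfolding S_def using tpj by (simp add: path_edges_def)

lemma Cc_j: "j < m \<Longrightarrow> Cc j j = 1"
  unfolding Cc_def using tpj by simp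

lemma S_Cc_step:
  assumes k: "k < m" and j: "j < m" and kj: "k \<noteq> j"
  defines "nx \<equiv> tree_path E k j ! 1"
  shows "S j k = f {k, nx} + S j nx" "Cc j k = inverse (lam j - lam k) * Cc j nx"
proof -
  let ?p = "tree_path E k j"
  note tn = tp_next[OF tree k j kj]
  have ne: "tl ?p \<noteq> []" using tn(1) by (cases ?p) auto
  have nxp: "tree_path E nx j = tl ?p" using tn(4) by (simp add: nx_def)
  have "path_edges ?p = insert {k, nx} (path_edges (tl ?p))"
    using path_edges_Cons[OF ne, of k] tn(5,7) by (simp add: nx_def)
  moreover have "{k, nx} \<notin> path_edges (tl ?p)" using path_edges_notin[OF tn(6)] .
  ultimately show "S j k = f {k, nx} + S j nx"
    unfolding S_def nxp by (simp add: path_edges_finite)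
  have "set ?p - {j} = insert k (set (tl ?p) - {j})" using tn(5) kj
    by (metis Diff_insert_absorb insert_Diff_if list.simps(15) singletonD)
  then show "Cc j k = inverse (lam j - lam k) * Cc j nx"
    unfolding Cc_def nxp using tn(6) by simp
qed

lemma S_bound:
  assumes k: "k < m" and j: "j < m"
  shows "S j k < N0 * length (tree_path E k j)"
proof -
  let ?p = "tree_path E k j"
  define G where "G = Max (g ` E)"
  have sub: "path_edges ?p \<subseteq> E" using tp_path[OF tree k j] path_edges_sub unfolding is_path_def by blast
  have "S j k \<le> (\<Sum>e\<in>path_edges ?p. N0 + G)" unfolding S_def
  proof (rule sum_mono)
    fix e assume "e \<in> path_edges ?p"
    then have e: "e \<in> E" using sub by auto
    have "g e \<le> G" unfolding G_def using finE e by (intro Max_ge) auto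
    then show "f e \<le> N0 + G" using f_def[OF e] by simp
  qed
  also have "\<dots> = card (path_edges ?p) * (N0 + G)" by simp
  also have "\<dots> \<le> (length ?p - 1) * (N0 + G)" by (intro mult_right_mono path_edges_card) simp
  also have "\<dots> = N0 * (length ?p - 1) + G * (length ?p - 1)" by (metis distrib_left mult.commute)
  also have "\<dots> < N0 * (length ?p - 1) + N0"
  proof -
    have "length ?p - 1 \<le> diam m E" using tp_len_diam[OF tree k j] by simp
    then have "G * (length ?p - 1) \<le> G * diam m E" by (rule mult_le_mono2)
    then have "G * (length ?p - 1) < N0" using N0 unfolding G_def by linarith
    then show ?thesis by simp
  qed
  also have "\<dots> = N0 * length ?p" using tp_ne[OF k j] by (cases "length ?p") (auto simp: algebra_simps)
  finally show ?thesis .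
qed

lemma main:
  assumes j: "j < m"
  shows "\<forall>i<m. length (tree_path E i j) = Suc D \<longrightarrow> (\<lambda>n. U n $$ (i,j) / t n ^ S j i) \<longlonglongrightarrow> Cc j i"
proof (induction D)
  case 0
  show ?case
  proof (intro allI impI)
    fix i assume i: "i < m" "length (tree_path E i j) = Suc 0"
    have "i = j" using tp_path[OF tree i(1) j] i(2)
      by (cases "tree_path E i j") (auto simp: is_path_def is_walk_def)
    then show "(\<lambda>n. U n $$ (i,j) / t n ^ S j i) \<longlonglongrightarrow> Cc j i"
      using diag1[OF j] S_j[OF j] Cc_j[OF j] by simp
  qed
next
  case (Suc D)
  show ?case
  proof (intro allI impI)
    fix i assume i: "i < m" and len: "length (tree_path E i j) = Suc (Suc D)"
    have ij: "i \<noteq> j" using len tpj[OF j] by auto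
    define nx where "nx = tree_path E i j ! 1"
    note tn = tp_next[OF tree i j ij, folded nx_def]
    have nxm: "nx < m" and enx: "{i,nx} \<in> E" using tn by auto
    have lennx: "length (tree_path E nx j) = Suc D" using tn(4) len by simp
    have nxi: "nx \<noteq> i" using nbr_lt[OF enx] by simp
    have IH: "(\<lambda>n. U n $$ (nx,j) / t n ^ S j nx) \<longlonglongrightarrow> Cc j nx" using Suc.IH nxm lennx by blast
    note st = S_Cc_step[OF i j ij, folded nx_def]
    define R where "R n = (\<Sum>l\<in>{..<m}-{i}-{nx}. A n $$ (i,l) * U n $$ (l,j) / t n ^ S j i)" for n
    from crude2[OF j] obtain C where C: "C \<ge> 0"
      "eventually (\<lambda>n. \<forall>k<m. \<bar>U n $$ (k,j)\<bar> \<le> C * t n ^ (N0 * (length (tree_path E k j) - 1))) sequentially"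
      by blast
    have Sb: "S j i < N0 * length (tree_path E i j)" by (rule S_bound[OF i j])
    have R0: "R \<longlonglongrightarrow> 0" unfolding R_def
    proof (rule tendsto_null_sum)
      fix l assume l: "l \<in> {..<m}-{i}-{nx}"
      show "(\<lambda>n. A n $$ (i,l) * U n $$ (l,j) / t n ^ S j i) \<longlonglongrightarrow> 0"
      proof (cases "{i,l} \<in> E")
        case False
        then have "A n $$ (i,l) = 0" for n using A_off[of i l n] i l by auto
        then show ?thesis by simp
      next
        case True
        have lm: "l < m" using l by simp
        have "tree_path E l j = l # tree_path E i j"
          using tp_nbr[OF tree i j True] l unfolding nx_def by auto
        then have lenl: "length (tree_path E l j) - 1 = length (tree_path E i j)" by simp
        have "eventually (\<lambda>n. \<bar>A n $$ (i,l) * U n $$ (l,j) / t n ^ S j i\<bar> \<le> C * t n) sequentially"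
          using eventually_conj[OF C(2) t_le1]
        proof (rule eventually_mono)
          fix n assume H: "(\<forall>k<m. \<bar>U n $$ (k,j)\<bar> \<le> C * t n ^ (N0 * (length (tree_path E k j) - 1))) \<and> t n \<le> 1"
          have t0: "0 < t n" by (rule t_pos)
          have Ail: "A n $$ (i,l) = t n ^ f {i,l}" using A_off[of i l n] i l True by auto
          have a1: "t n ^ f {i,l} \<le> 1" using t0 H by (simp add: power_le_one)
          have ub: "\<bar>U n $$ (l,j)\<bar> \<le> C * t n ^ (N0 * length (tree_path E i j))"
            using H lm lenl by metis
          have "\<bar>A n $$ (i,l) * U n $$ (l,j) / t n ^ S j i\<bar> = t n ^ f {i,l} * \<bar>U n $$ (l,j)\<bar> / t n ^ S j i"
            using Ail t0 by (simp add: abs_mult)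
          also have "\<dots> \<le> 1 * (C * t n ^ (N0 * length (tree_path E i j))) / t n ^ S j i"
            using a1 ub t0 by (intro divide_right_mono mult_mono) auto
          also have "\<dots> = C * t n ^ (N0 * length (tree_path E i j) - S j i)"
            using Sb t0 by (simp add: power_diff)
          also have "\<dots> \<le> C * t n ^ 1"
            using Sb t0 H C(1) by (intro mult_left_mono power_decreasing) auto
          finally show "\<bar>A n $$ (i,l) * U n $$ (l,j) / t n ^ S j i\<bar> \<le> C * t n" by simp
        qed
        then show ?thesis by (rule null_cmp)
      qed
    qed
    from gap[OF j] obtain \<delta> where dpos: "\<delta> > 0"
      and gapev: "eventually (\<lambda>n. \<forall>k\<in>{..<m}-{j}. \<delta> \<le> \<bar>lam j - A n $$ (k,k)\<bar>) sequentially" by blast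
    have ev: "eventually (\<lambda>n. (U n $$ (nx,j) / t n ^ S j nx + R n) / (lam j - A n $$ (i,i))
                   = U n $$ (i,j) / t n ^ S j i) sequentially"
      using gapev
    proof (rule eventually_mono)
      fix n assume H: "\<forall>k\<in>{..<m}-{j}. \<delta> \<le> \<bar>lam j - A n $$ (k,k)\<bar>"
      define d where "d = lam j - A n $$ (i,i)"
      have d0: "d \<noteq> 0" using H i ij dpos unfolding d_def by force
      define a where "a = t n ^ f {i,nx}"
      define b where "b = t n ^ S j nx"
      have a0: "a > 0" and b0: "b > 0" using t_pos[of n] by (auto simp: a_def b_def)
      have tS: "t n ^ S j i = a * b" using st(1) by (simp add: a_def b_def power_add)
      define Rs where "Rs = (\<Sum>l\<in>{..<m}-{i}-{nx}. A n $$ (i,l) * U n $$ (l,j))"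
      have RR: "R n = Rs / (a * b)" unfolding R_def Rs_def tS by (simp add: sum_divide_distrib)
      have "d * U n $$ (i,j) = (\<Sum>l\<in>{..<m}-{i}. A n $$ (i,l) * U n $$ (l,j))"
        unfolding d_def by (rule eig_split[OF i j])
      also have "\<dots> = A n $$ (i,nx) * U n $$ (nx,j) + Rs"
        unfolding Rs_def by (rule sum.remove) (use nxm nxi in auto)
      also have "A n $$ (i,nx) = a" using A_off[of i nx n] i nxm nxi enx by (simp add: a_def)
      finally have key: "d * U n $$ (i,j) = a * U n $$ (nx,j) + Rs" .
      have "(U n $$ (nx,j) / b + Rs / (a * b)) / d = (a * U n $$ (nx,j) + Rs) / (a * b * d)"
        using a0 b0 d0 by (simp add: field_simps)
      also have "\<dots> = U n $$ (i,j) / (a * b)" using key a0 b0 d0 by (simp add: field_simps)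
      finally show "(U n $$ (nx,j) / t n ^ S j nx + R n) / (lam j - A n $$ (i,i)) = U n $$ (i,j) / t n ^ S j i"
        unfolding RR tS by (simp add: b_def d_def)
    qed
    have "(\<lambda>n. (U n $$ (nx,j) / t n ^ S j nx + R n) / (lam j - A n $$ (i,i))) \<longlonglongrightarrow> (Cc j nx + 0) / (lam j - lam i)"
      using lam_ne[OF i j ij] by (intro tendsto_intros IH R0 A_diag_lim i) simp
    then have "(\<lambda>n. U n $$ (i,j) / t n ^ S j i) \<longlonglongrightarrow> (Cc j nx + 0) / (lam j - lam i)"
      using ev by (rule Lim_transform_eventually)
    then show "(\<lambda>n. U n $$ (i,j) / t n ^ S j i) \<longlonglongrightarrow> Cc j i"
      using st(2) by (simp add: field_simps)
  qed
qed

lemma final: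
  "\<forall>i<m. \<forall>j<m.
           (\<lambda>n. U n $$ (i, j) / t n ^ (\<Sum>e\<in>path_edges (tree_path E i j). f e))
           \<longlonglongrightarrow> (\<Prod>k\<in>set (tree_path E i j) - {j}. inverse (lam j - lam k))"
proof (intro allI impI)
  fix i j assume i: "i < m" and j: "j < m"
  have "length (tree_path E i j) = Suc (length (tree_path E i j) - 1)" using tp_ne[OF i j] by simp
  then show "(\<lambda>n. U n $$ (i, j) / t n ^ (\<Sum>e\<in>path_edges (tree_path E i j). f e))
           \<longlonglongrightarrow> (\<Prod>k\<in>set (tree_path E i j) - {j}. inverse (lam j - lam k))"
    using main[OF j] i unfolding S_def Cc_def by blast
qed

end

theorem lemma2p3:
  fixes m :: nat and lam :: "nat \<Rightarrow> real" and E :: "nat set set"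
    and g :: "nat set \<Rightarrow> nat" and N0 :: nat and f :: "nat set \<Rightarrow> nat"
    and t :: "nat \<Rightarrow> real" and A U :: "nat \<Rightarrow> real mat"
  assumes lam_mono: "\<And>i j. i < j \<Longrightarrow> j < m \<Longrightarrow> lam i < lam j"
    and tree: "is_tree m E"
    and N0: "N0 > Max (g ` E) * diam m E"
    and f_def: "\<And>e. e \<in> E \<Longrightarrow> f e = N0 + g e"
    and t_pos: "\<And>n. t n > 0"
    and t_lim: "t \<longlonglongrightarrow> 0"
    and A_M: "\<And>n. in_M m E f (t n) (A n)"
    and A_E: "\<And>n. in_E m lam (A n)"
    and A_lim: "\<And>i j. i < m \<Longrightarrow> j < m \<Longrightarrow>
                  (\<lambda>n. A n $$ (i, j)) \<longlonglongrightarrow> diag_Lambda m lam $$ (i, j)"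
    and U_carrier: "\<And>n. U n \<in> carrier_mat m m"
    and U_orth: "\<And>n. transpose_mat (U n) * U n = 1\<^sub>m m"
    and U_diag: "\<And>n i. i < m \<Longrightarrow> U n $$ (i, i) \<ge> 0"
    and U_diagonalizes: "\<And>n. transpose_mat (U n) * A n * U n = diag_Lambda m lam"
  shows "\<forall>i<m. \<forall>j<m.
           (\<lambda>n. U n $$ (i, j) / t n ^ (\<Sum>e\<in>path_edges (tree_path E i j). f e))
           \<longlonglongrightarrow> (\<Prod>k\<in>set (tree_path E i j) - {j}. inverse (lam j - lam k))"
    using L.final[OF L.intro[OF assms]] .

end
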